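(* Let $I\subset\mathbb{Z}$ be an interval and let $\vec r,\vec{\bar r}:I\to\mathbb{R}^2$ be two nondegenerate discrete planar curves whose first and second centroaffine curvatures coincide at corresponding points, i.e. $\kappa_k(\vec r)=\kappa_k(\vec{\bar r})$ and $\bar\kappa_k(\vec r)=\bar\kappa_k(\vec{\bar r})$ for every $k$ at which they are defined. Then there exist a matrix $A\in GL(2,\mathbb{R})$ and a constant vector $\vec C\in\mathbb{R}^2$ such that $\vec r(k)=A\,\vec{\bar r}(k)+\vec C$ for all $k\in I$; i.e. the two curves are affinely equivalent.
   Context: A discrete planar curve is a map $\vec r:I\to\mathbb{R}^2$, $I\subset\mathbb{Z}$ an interval (possibly infinite, containing at least three consecutive integers); write $\vec r_k=\vec r(k)$ and $\vec t_k=\vec r_{k+1}-\vec r_k$ (edge tangent vector). $[\vec a,\vec b]$ denotes the $2\times 2$ determinant. The curve is nondegenerate if $[\vec t_{k-1},\vec t_k]\neq 0$ whenever $k-1,k,k+1\in I$. Its first and second centroaffine curvatures at $k$ (whenever $k-1,k,k+1,k+2\in I$) are $\kappa_k=\frac{[\vec t_k,\vec t_{k+1}]}{[\vec t_{k-1},\vec t_k]}$ and $\bar\kappa_k=\frac{[\vec t_{k-1},\vec t_{k+1}]}{[\vec t_{k-1},\vec t_k]}$. *)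

theory Defs
  imports "HOL-Analysis.Analysis"
begin

definition det2 :: "real^2 \<Rightarrow> real^2 \<Rightarrow> real" where
  "det2 a b = a$1 * b$2 - a$2 * b$1"

definition int_interval :: "int set \<Rightarrow> bool" where
  "int_interval I \<longleftrightarrow> (\<forall>i j k. i \<in> I \<longrightarrow> k \<in> I \<longrightarrow> i \<le> j \<longrightarrow> j \<le> k \<longrightarrow> j \<in> I)
     \<and> (\<exists>k. k - 1 \<in> I \<and> k \<in> I \<and> k + 1 \<in> I)"

definition tang :: "(int \<Rightarrow> real^2) \<Rightarrow> int \<Rightarrow> real^2" where
  "tang r k = r (k + 1) - r k"

definition nondegenerate :: "int set \<Rightarrow> (int \<Rightarrow> real^2) \<Rightarrow> bool" where
  "nondegenerate I r \<longleftrightarrow>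
     (\<forall>k. k - 1 \<in> I \<and> k \<in> I \<and> k + 1 \<in> I \<longrightarrow> det2 (tang r (k - 1)) (tang r k) \<noteq> 0)"

text \<open>First and second centroaffine curvatures (meaningful when k-1,k,k+1,k+2 are in I).\<close>
definition kappa :: "(int \<Rightarrow> real^2) \<Rightarrow> int \<Rightarrow> real" where
  "kappa r k = det2 (tang r k) (tang r (k + 1)) / det2 (tang r (k - 1)) (tang r k)"

definition kappa_bar :: "(int \<Rightarrow> real^2) \<Rightarrow> int \<Rightarrow> real" where
  "kappa_bar r k = det2 (tang r (k - 1)) (tang r (k + 1)) / det2 (tang r (k - 1)) (tang r k)"

end

theory Submission
  imports Defs
begin

lemma vec2_eq: "(x::real^2) = y \<longleftrightarrow> x$1 = y$1 \<and> x$2 = y$2"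
  by (simp add: vec_eq_iff forall_2)

lemma cramer2:
  assumes "det2 a b \<noteq> 0"
  shows "c = (det2 c b / det2 a b) *\<^sub>R a + (det2 a c / det2 a b) *\<^sub>R b"
proof -
  let ?D = "det2 a b"
  have h1: "?D * c$1 = det2 c b * a$1 + det2 a c * b$1" by (simp add: det2_def algebra_simps)
  have h2: "?D * c$2 = det2 c b * a$2 + det2 a c * b$2" by (simp add: det2_def algebra_simps)
  have "c$1 = (det2 c b / ?D) * a$1 + (det2 a c / ?D) * b$1"
  proof -
    have "(det2 c b / ?D) * a$1 + (det2 a c / ?D) * b$1 = (det2 c b * a$1 + det2 a c * b$1) / ?D"
      by (simp add: add_divide_distrib)
    also have "\<dots> = c$1" using assms by (simp flip: h1)
    finally show ?thesis by simp
  qed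
  moreover have "c$2 = (det2 c b / ?D) * a$2 + (det2 a c / ?D) * b$2"
  proof -
    have "(det2 c b / ?D) * a$2 + (det2 a c / ?D) * b$2 = (det2 c b * a$2 + det2 a c * b$2) / ?D"
      by (simp add: add_divide_distrib)
    also have "\<dots> = c$2" using assms by (simp flip: h2)
    finally show ?thesis by simp
  qed
  ultimately show ?thesis by (simp add: vec2_eq)
qed

lemma fwd:
  assumes "det2 (tang r (k - 1)) (tang r k) \<noteq> 0"
  shows "tang r (k + 1) = (- kappa r k) *\<^sub>R tang r (k - 1) + kappa_bar r k *\<^sub>R tang r k"
proof -
  have "det2 (tang r (k + 1)) (tang r k) = - det2 (tang r k) (tang r (k + 1))"
    by (simp add: det2_def)
  then show ?thesis
    using cramer2[OF assms, of "tang r (k+1)"]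
    by (simp add: kappa_def kappa_bar_def)
qed

lemma bwd:
  assumes "det2 (tang r (k - 1)) (tang r k) \<noteq> 0" "det2 (tang r k) (tang r (k + 1)) \<noteq> 0"
  shows "kappa r k \<noteq> 0 \<and> tang r (k - 1) = (1 / kappa r k) *\<^sub>R (kappa_bar r k *\<^sub>R tang r k - tang r (k + 1))"
proof -
  have kn: "kappa r k \<noteq> 0" using assms by (simp add: kappa_def)
  have "tang r (k + 1) = (- kappa r k) *\<^sub>R tang r (k - 1) + kappa_bar r k *\<^sub>R tang r k"
    by (rule fwd[OF assms(1)])
  then have "kappa r k *\<^sub>R tang r (k - 1) = kappa_bar r k *\<^sub>R tang r k - tang r (k + 1)"
    by (simp add: algebra_simps)
  then have "(1 / kappa r k) *\<^sub>R (kappa r k *\<^sub>R tang r (k - 1)) = (1 / kappa r k) *\<^sub>R (kappa_bar r k *\<^sub>R tang r k - tang r (k + 1))"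
    by simp
  with kn show ?thesis by simp
qed

lemma matrix_exists:
  fixes u1 u2 v1 v2 :: "real^2"
  assumes "det2 u1 u2 \<noteq> 0" "det2 v1 v2 \<noteq> 0"
  shows "\<exists>A :: real^2^2. invertible A \<and> A *v u1 = v1 \<and> A *v u2 = v2"
proof -
  define d where "d = det2 u1 u2"
  define A :: "real^2^2" where "A = (\<chi> i j. if j = 1 then (u2$2* v1$i - u1$2* v2$i)/d else (u1$1* v2$i - u2$1* v1$i)/d)"
  have Ax: "(A *v x) $ i = (x$1 * (u2$2* v1$i - u1$2* v2$i) + x$2 * (u1$1* v2$i - u2$1* v1$i))/d" for x i
    by (simp add: A_def matrix_vector_mult_def sum_2 add_divide_distrib mult.commute)
  have dn: "d \<noteq> 0" using assms(1) by (simp add: d_def)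
  have 1: "A *v u1 = v1"
    unfolding vec2_eq Ax using dn by (simp add: d_def det2_def field_simps; (auto simp: algebra_simps)?)
  have 2: "A *v u2 = v2"
    unfolding vec2_eq Ax using dn by (simp add: d_def det2_def field_simps; (auto simp: algebra_simps)?)
  have "\<forall>x. A *v x = 0 \<longrightarrow> x = 0"
  proof (intro allI impI)
    fix x assume "A *v x = 0"
    then have e1: "x$1 * (u2$2* v1$1 - u1$2* v2$1) + x$2 * (u1$1* v2$1 - u2$1* v1$1) = 0"
      and e2: "x$1 * (u2$2* v1$2 - u1$2* v2$2) + x$2 * (u1$1* v2$2 - u2$1* v1$2) = 0"
      using dn by (auto simp: vec2_eq Ax)
    define p where "p = x$1 * u2$2 - x$2 * u2$1"
    define q where "q = x$2 * u1$1 - x$1 * u1$2"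
    have f1: "p * v1$1 + q * v2$1 = 0" using e1 unfolding p_def q_def by (simp add: algebra_simps)
    have f2: "p * v1$2 + q * v2$2 = 0" using e2 unfolding p_def q_def by (simp add: algebra_simps)
    have a: "p * det2 v1 v2 = (p * v1$1 + q * v2$1) * v2$2 - (p * v1$2 + q * v2$2) * v2$1"
      by (simp add: det2_def algebra_simps)
    have b: "q * det2 v1 v2 = (p * v1$2 + q * v2$2) * v1$1 - (p * v1$1 + q * v2$1) * v1$2"
      by (simp add: det2_def algebra_simps)
    have a': "p * det2 v1 v2 = 0" unfolding a f1 f2 by simp
    have b': "q * det2 v1 v2 = 0" unfolding b f1 f2 by simp
    have pq: "p = 0 \<and> q = 0" using a' b' assms(2) by simp
    have g1: "x$1 * d = p * u1$1 + q * u2$1" unfolding p_def q_def d_def det2_def by (simp add: algebra_simps)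
    have g2: "x$2 * d = p * u1$2 + q * u2$2" unfolding p_def q_def d_def det2_def by (simp add: algebra_simps)
    show "x = 0" using g1 g2 pq dn by (simp add: vec2_eq)
  qed
  then have "invertible A" by (simp add: invertible_left_inverse matrix_left_invertible_ker)
  with 1 2 show ?thesis by blast
qed

theorem proposition3p3:
  fixes I :: "int set" and r rb :: "int \<Rightarrow> real^2"
  assumes "int_interval I"
    and "nondegenerate I r" and "nondegenerate I rb"
    and "\<And>k. k - 1 \<in> I \<Longrightarrow> k \<in> I \<Longrightarrow> k + 1 \<in> I \<Longrightarrow> k + 2 \<in> I \<Longrightarrow>
           kappa r k = kappa rb k \<and> kappa_bar r k = kappa_bar rb k"
  shows "\<exists>(A :: real^2^2) (C :: real^2). invertible A \<and> (\<forall>k\<in>I. r k = A *v rb k + C)"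
proof -
  have conv: "\<And>i j k. i \<in> I \<Longrightarrow> k \<in> I \<Longrightarrow> i \<le> j \<Longrightarrow> j \<le> k \<Longrightarrow> j \<in> I"
    using assms(1) unfolding int_interval_def by blast
  obtain k0 where k0: "k0 - 1 \<in> I" "k0 \<in> I" "k0 + 1 \<in> I"
    using assms(1) unfolding int_interval_def by blast
  have ndr: "\<And>k. k - 1 \<in> I \<Longrightarrow> k \<in> I \<Longrightarrow> k + 1 \<in> I \<Longrightarrow> det2 (tang r (k - 1)) (tang r k) \<noteq> 0"
    using assms(2) unfolding nondegenerate_def by blast
  have ndb: "\<And>k. k - 1 \<in> I \<Longrightarrow> k \<in> I \<Longrightarrow> k + 1 \<in> I \<Longrightarrow> det2 (tang rb (k - 1)) (tang rb k) \<noteq> 0"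
    using assms(3) unfolding nondegenerate_def by blast
  obtain A :: "real^2^2" where A: "invertible A" "A *v tang rb (k0 - 1) = tang r (k0 - 1)"
      "A *v tang rb k0 = tang r k0"
    using matrix_exists[OF ndb[OF k0] ndr[OF k0]] by blast
  have sfwd: "A *v tang rb (k + 1) = tang r (k + 1)"
    if h: "k - 1 \<in> I" "k \<in> I" "k + 1 \<in> I" "k + 2 \<in> I"
      and e: "A *v tang rb (k - 1) = tang r (k - 1)" "A *v tang rb k = tang r k" for k
  proof -
    have "A *v tang rb (k + 1) = A *v ((- kappa rb k) *\<^sub>R tang rb (k - 1) + kappa_bar rb k *\<^sub>R tang rb k)"
      using fwd[OF ndb[OF h(1-3)]] by simp
    also have "\<dots> = (- kappa rb k) *\<^sub>R tang r (k - 1) + kappa_bar rb k *\<^sub>R tang r k"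
      using e by (simp add: matrix_vector_right_distrib matrix_vector_mult_diff_distrib matrix_vector_mult_scaleR)
    also have "\<dots> = tang r (k + 1)"
      using fwd[OF ndr[OF h(1-3)]] assms(4)[OF h] by simp
    finally show ?thesis .
  qed
  have sbwd: "A *v tang rb (k - 1) = tang r (k - 1)"
    if h: "k - 1 \<in> I" "k \<in> I" "k + 1 \<in> I" "k + 2 \<in> I"
      and e: "A *v tang rb k = tang r k" "A *v tang rb (k + 1) = tang r (k + 1)" for k
  proof -
    have h2: "(k + 1) - 1 \<in> I" "k + 1 \<in> I" "(k + 1) + 1 \<in> I" using h by (auto simp: add.assoc)
    have dr: "det2 (tang r k) (tang r (k + 1)) \<noteq> 0" using ndr[OF h2] by simp
    have db: "det2 (tang rb k) (tang rb (k + 1)) \<noteq> 0" using ndb[OF h2] by simp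
    have "A *v tang rb (k - 1) = A *v ((1 / kappa rb k) *\<^sub>R (kappa_bar rb k *\<^sub>R tang rb k - tang rb (k + 1)))"
      using bwd[OF ndb[OF h(1-3)] db] by simp
    also have "\<dots> = (1 / kappa rb k) *\<^sub>R (kappa_bar rb k *\<^sub>R tang r k - tang r (k + 1))"
      using e by (simp add: matrix_vector_mult_diff_distrib matrix_vector_mult_scaleR)
    also have "\<dots> = tang r (k - 1)"
      using bwd[OF ndr[OF h(1-3)] dr] assms(4)[OF h] by simp
    finally show ?thesis .
  qed
  have up: "j + 1 \<in> I \<longrightarrow> A *v tang rb (j - 1) = tang r (j - 1) \<and> A *v tang rb j = tang r j"
    if "k0 \<le> j" for j
    using that
  proof (induction j rule: int_ge_induct)
    case base
    then show ?case using A by simp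
  next
    case (step i)
    show ?case
    proof
      assume i2: "i + 1 + 1 \<in> I"
      have i1: "i + 1 \<in> I" using conv[OF k0(1) i2] step(1) by simp
      have i0: "i \<in> I" using conv[OF k0(1) i2] step(1) by simp
      have im: "i - 1 \<in> I" using conv[OF k0(1) i2] step(1) by simp
      have e: "A *v tang rb (i - 1) = tang r (i - 1)" "A *v tang rb i = tang r i"
        using step(2) i1 by auto
      have "A *v tang rb (i + 1) = tang r (i + 1)"
        using sfwd[OF im i0 i1 _ e] i2 by (simp add: add.assoc)
      then show "A *v tang rb (i + 1 - 1) = tang r (i + 1 - 1) \<and> A *v tang rb (i + 1) = tang r (i + 1)"
        using e by simp
    qed
  qed
  have down: "j \<in> I \<longrightarrow> A *v tang rb j = tang r j \<and> A *v tang rb (j + 1) = tang r (j + 1)"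
    if "j \<le> k0 - 1" for j
    using that
  proof (induction j rule: int_le_induct)
    case base
    then show ?case using A by simp
  next
    case (step i)
    show ?case
    proof
      assume im: "i - 1 \<in> I"
      have i0: "i \<in> I" using conv[OF im k0(3)] step(1) by simp
      have i1: "i + 1 \<in> I" using conv[OF im k0(3)] step(1) by simp
      have i2: "i + 2 \<in> I" using conv[OF im k0(3)] step(1) by simp
      have e: "A *v tang rb i = tang r i" "A *v tang rb (i + 1) = tang r (i + 1)"
        using step(2) i0 by auto
      have "A *v tang rb (i - 1) = tang r (i - 1)"
        using sbwd[OF im i0 i1 i2 e] .
      then show "A *v tang rb (i - 1) = tang r (i - 1) \<and> A *v tang rb (i - 1 + 1) = tang r (i - 1 + 1)"
        using e by simp
    qed
  qed
  have tall: "A *v tang rb k = tang r k" if "k \<in> I" "k + 1 \<in> I" for k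
  proof (cases "k0 \<le> k")
    case True
    then show ?thesis using up[OF True] that by simp
  next
    case False
    then have "k \<le> k0 - 1" by simp
    then show ?thesis using down that by simp
  qed
  define C where "C = r k0 - A *v rb k0"
  have pup: "j \<in> I \<longrightarrow> r j = A *v rb j + C" if "k0 \<le> j" for j
    using that
  proof (induction j rule: int_ge_induct)
    case base
    then show ?case by (simp add: C_def)
  next
    case (step i)
    show ?case
    proof
      assume i1: "i + 1 \<in> I"
      have i0: "i \<in> I" using conv[OF k0(2) i1] step(1) by simp
      have "r (i + 1) = r i + tang r i" by (simp add: tang_def)
      also have "\<dots> = A *v rb i + C + A *v tang rb i" using step(2) i0 tall[OF i0 i1] by simp
      also have "\<dots> = A *v rb (i + 1) + C" by (simp add: tang_def matrix_vector_mult_diff_distrib)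
      finally show "r (i + 1) = A *v rb (i + 1) + C" .
    qed
  qed
  have pdown: "j \<in> I \<longrightarrow> r j = A *v rb j + C" if "j \<le> k0" for j
    using that
  proof (induction j rule: int_le_induct)
    case base
    then show ?case by (simp add: C_def)
  next
    case (step i)
    show ?case
    proof
      assume im: "i - 1 \<in> I"
      have i0: "i \<in> I" using conv[OF im k0(2)] step(1) by simp
      have t: "A *v tang rb (i - 1) = tang r (i - 1)" using tall[of "i - 1"] im i0 by simp
      have "r (i - 1) = r i - tang r (i - 1)" by (simp add: tang_def)
      also have "\<dots> = A *v rb i + C - A *v tang rb (i - 1)" using step(2) i0 t by simp
      also have "\<dots> = A *v rb (i - 1) + C" by (simp add: tang_def matrix_vector_mult_diff_distrib)
      finally show "r (i - 1) = A *v rb (i - 1) + C" .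
    qed
  qed
  have "\<forall>k\<in>I. r k = A *v rb k + C"
  proof
    fix k assume "k \<in> I"
    then show "r k = A *v rb k + C"
      using pup[of k] pdown[of k] by (cases "k0 \<le> k") auto
  qed
  with A(1) show ?thesis by blast
qed

end
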